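(* Let $S\subset\mathbb{Z}^d$ be a finite set containing the origin, $\mathcal{P}=\{P_\alpha\}_{\alpha\in S}$ a resolution of unity on $\mathbb{C}^D$ with $\operatorname{rank}P_0=1$, $\mu\in\mathbb{C}^D$ a unit vector and $C_\mu\phi=2\langle\phi,\mu\rangle\mu-\phi$. If $P_0\mu\neq0$, then $U(S,\mathcal{P},C_\mu)$ does not have the eigenvalue $-1$.
   Context: A resolution of unity: orthogonal projections $P_\alpha$ on $\mathbb{C}^D$, $P_\alpha P_\beta=0$ ($\alpha\neq\beta$), $\sum_\alpha P_\alpha=I$. $(\tau^\alpha f)(x)=f(x-\alpha)$ on $\ell^2(\mathbb{Z}^d,\mathbb{C}^D)$, $U(S,\mathcal{P},C)=\big(\sum_{\alpha\in S}\tau^\alpha P_\alpha\big)C$ with $C$ acting pointwise; eigenvalue means point spectrum. Inner products are linear in the first argument. *)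

theory Defs
  imports "HOL-Analysis.Analysis"
begin

text \<open>Vectors in C^D are complex^'n with D = CARD('n); lattice points in Z^d are int^'d.\<close>

definition cinner :: "complex^'n \<Rightarrow> complex^'n \<Rightarrow> complex" where
  "cinner u v = (\<Sum>i\<in>UNIV. u$i * cnj (v$i))"

definition cadjoint :: "complex^'n^'n \<Rightarrow> complex^'n^'n" where
  "cadjoint A = (\<chi> i j. cnj (A$j$i))"

definition orth_projection :: "complex^'n^'n \<Rightarrow> bool" where
  "orth_projection A \<longleftrightarrow> A ** A = A \<and> cadjoint A = A"

definition resolution_of_unity :: "'i set \<Rightarrow> ('i \<Rightarrow> complex^'n^'n) \<Rightarrow> bool" where
  "resolution_of_unity S P \<longleftrightarrow>
     (\<forall>\<alpha>\<in>S. orth_projection (P \<alpha>)) \<and>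
     (\<forall>\<alpha>\<in>S. \<forall>\<beta>\<in>S. \<alpha> \<noteq> \<beta> \<longrightarrow> P \<alpha> ** P \<beta> = 0) \<and>
     (\<Sum>\<alpha>\<in>S. P \<alpha>) = mat 1"

text \<open>The coin C_mu phi = 2 <phi,mu> mu - phi, as a matrix.\<close>
definition coin_mu :: "complex^'n \<Rightarrow> complex^'n^'n" where
  "coin_mu \<mu> = (\<chi> i j. 2 * \<mu>$i * cnj (\<mu>$j) - (if i = j then 1 else 0))"

definition ell2 :: "(int^'d \<Rightarrow> complex^'n) \<Rightarrow> bool" where
  "ell2 f \<longleftrightarrow> (\<lambda>x. (norm (f x))\<^sup>2) summable_on UNIV"

definition walk_U :: "(int^'d) set \<Rightarrow> (int^'d \<Rightarrow> complex^'n^'n) \<Rightarrow> complex^'n^'n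
      \<Rightarrow> (int^'d \<Rightarrow> complex^'n) \<Rightarrow> (int^'d \<Rightarrow> complex^'n)" where
  "walk_U S P C f = (\<lambda>x. \<Sum>\<alpha>\<in>S. P \<alpha> *v (C *v f (x - \<alpha>)))"

definition has_eigenvalue ::
  "((int^'d \<Rightarrow> complex^'n) \<Rightarrow> (int^'d \<Rightarrow> complex^'n)) \<Rightarrow> complex \<Rightarrow> bool" where
  "has_eigenvalue T c \<longleftrightarrow> (\<exists>f. ell2 f \<and> f \<noteq> (\<lambda>_. 0) \<and> T f = (\<lambda>x. c *s f x))"

end

theory Submission
  imports Defs
begin

lemma mv_sum: "finite S \<Longrightarrow> (\<Sum>a\<in>S. A a) *v x = (\<Sum>a\<in>S. A a *v x)"
  by (induction S rule: finite_induct) (auto simp: matrix_vector_mult_add_rdistrib)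

lemma delta_sum: "(\<Sum>j\<in>UNIV. (v::complex^'n)$j * (if i = j then 1 else 0)) = v$i"
proof -
  have "\<And>j. v$j * (if i=j then 1 else 0) = (if i=j then v$j else 0)" by simp
  then show ?thesis by (simp add: sum.delta)
qed

lemma coin_apply: "coin_mu \<mu> *v v = (2 * cinner v \<mu>) *s \<mu> - v"
  unfolding coin_mu_def cinner_def
  by (simp add: vec_eq_iff matrix_vector_mult_def right_diff_distrib sum_subtractf sum_distrib_left
      if_distrib[where f="\<lambda>z. z * _"] mult.commute mult.left_commute delta_sum cong: if_cong)

lemma cinner_adj: "cinner (A *v u) v = cinner u (cadjoint A *v v)"
proof -
  have "cinner (A *v u) v = (\<Sum>i\<in>UNIV. \<Sum>j\<in>UNIV. A$i$j * u$j * cnj (v$i))"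
    unfolding cinner_def matrix_vector_mult_def by (simp add: sum_distrib_right)
  also have "\<dots> = (\<Sum>j\<in>UNIV. \<Sum>i\<in>UNIV. A$i$j * u$j * cnj (v$i))"
    by (rule sum.swap)
  also have "\<dots> = (\<Sum>j\<in>UNIV. u$j * (\<Sum>i\<in>UNIV. A$i$j * cnj (v$i)))"
    by (simp add: sum_distrib_left mult.commute mult.left_commute)
  also have "\<dots> = cinner u (cadjoint A *v v)"
    unfolding cinner_def cadjoint_def matrix_vector_mult_def by simp
  finally show ?thesis .
qed

lemma cinner_self_0: "cinner v v = 0 \<Longrightarrow> v = 0"
proof -
  assume h: "cinner v v = 0"
  have "cinner v v = complex_of_real (\<Sum>i\<in>UNIV. (cmod (v$i))\<^sup>2)"
    unfolding cinner_def by (simp add: complex_mult_cnj cmod_def)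
  with h have "(\<Sum>i\<in>UNIV. (cmod (v$i))\<^sup>2) = 0" by (metis of_real_eq_0_iff)
  then have "\<forall>i\<in>UNIV. (cmod (v$i))\<^sup>2 = 0" by (subst (asm) sum_nonneg_eq_0_iff) auto
  then show "v = 0" by (simp add: vec_eq_iff)
qed

lemma proj_inner: "orth_projection P \<Longrightarrow> cinner (P *v u) u = cinner (P *v u) (P *v u)"
  unfolding orth_projection_def
  by (metis cinner_adj matrix_vector_mul_assoc)

lemma rank1: fixes A :: "complex^'n^'n" assumes "rank A = 1"
  shows "\<exists>r a. \<forall>x. A *v x = (\<Sum>j\<in>UNIV. r$j * x$j) *s a"
proof -
  obtain B where B: "B \<subseteq> rows A" "vec.independent B" "rows A \<subseteq> vec.span B" "card B = 1"
    using vec.basis_exists[of "rows A"] assms unfolding row_rank_def_gen by metis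
  then obtain r where "B = {r}" by (meson card_1_singletonE)
  with B have "\<forall>i. \<exists>k. A$i = k *s r"
    by (auto simp: rows_def row_def vec.span_singleton)
  then obtain a where a: "\<And>i. A$i = a i *s r" by metis
  show ?thesis
    apply (rule exI[of _ r], rule exI[of _ "\<chi> i. a i"])
    by (simp add: vec_eq_iff matrix_vector_mult_def a sum_distrib_left ac_simps)
qed
lemma periodic_zero:
  fixes f :: "int^'d \<Rightarrow> complex^'n" and \<beta> :: "int^'d"
  assumes ell: "ell2 f" and b: "\<beta> \<noteq> 0"
    and per: "\<And>y. A *v f (y + \<beta>) = A *v f y"
  shows "A *v f y = 0"
proof -
  define h where "h k = y + (int k) *s \<beta>" for k :: nat
  have hs: "h (Suc k) = h k + \<beta>" for k
    by (simp add: h_def vec_eq_iff algebra_simps)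
  have const: "A *v f (h k) = A *v f y" for k
    by (induction k) (simp_all add: h_def[of 0] hs per)
  obtain i where i: "\<beta>$i \<noteq> 0" using b by (metis vec_eq_iff zero_index)
  have "inj h"
  proof (rule injI)
    fix k m assume "h k = h m"
    then have "(h k)$i = (h m)$i" by simp
    then have "int k * \<beta>$i = int m * \<beta>$i" by (simp add: h_def)
    with i show "k = m" by simp
  qed
  have "(\<lambda>x. (norm (f x))\<^sup>2) summable_on range h"
    using ell unfolding ell2_def by (rule summable_on_subset_banach) auto
  then have "(\<lambda>k. (norm (f (h k)))\<^sup>2) summable_on UNIV"
    using summable_on_reindex[OF inj_on_subset[OF \<open>inj h\<close>], of UNIV "\<lambda>x. (norm (f x))\<^sup>2"]
    by (simp add: o_def)
  then have "summable (\<lambda>k. (norm (f (h k)))\<^sup>2)" by (rule summable_on_imp_summable)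
  then have "(\<lambda>k. (norm (f (h k)))\<^sup>2) \<longlonglongrightarrow> 0" by (rule summable_LIMSEQ_zero)
  then have "(\<lambda>k. sqrt ((norm (f (h k)))\<^sup>2)) \<longlonglongrightarrow> sqrt 0" by (intro tendsto_intros)
  then have "(\<lambda>k. norm (f (h k))) \<longlonglongrightarrow> 0" by simp
  then have "(\<lambda>k. f (h k)) \<longlonglongrightarrow> 0" by (simp add: tendsto_norm_zero_iff)
  then have "(\<lambda>k. A *v f (h k)) \<longlonglongrightarrow> A *v 0"
    by (intro bounded_linear.tendsto[OF matrix_vector_mul_bounded_linear])
  then have "(\<lambda>k. A *v f y) \<longlonglongrightarrow> 0" by (simp add: const)
  then show ?thesis by (simp add: LIMSEQ_const_iff)
qed

lemma mv_neg: "(A::complex^'n^'m) *v (- v) = - (A *v v)"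
  by (simp add: vec_eq_iff matrix_vector_mult_def sum_negf)
lemma mv_diff: "(A::complex^'n^'m) *v (u - v) = A *v u - A *v v"
  by (simp add: vec_eq_iff matrix_vector_mult_def sum_subtractf right_diff_distrib)
lemma mv_scale: "(A::complex^'n^'m) *v (c *s v) = c *s (A *v v)"
  by (simp add: vec_eq_iff matrix_vector_mult_def sum_distrib_left ac_simps)
lemma mv_sum2: "finite S \<Longrightarrow> A *v (\<Sum>a\<in>S. g a) = (\<Sum>a\<in>S. A *v g a)"
  by (induction S rule: finite_induct) (auto simp: matrix_vector_right_distrib)
lemma cinner_scale: "cinner (k *s a) b = k * cinner a b"
  by (simp add: cinner_def sum_distrib_left ac_simps)

theorem theorem3p4:
  fixes S :: "(int^'d) set" and P :: "int^'d \<Rightarrow> complex^'n^'n" and \<mu> :: "complex^'n"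
  assumes "finite S" and "0 \<in> S"
    and "resolution_of_unity S P"
    and "rank (P 0) = 1"
    and "norm \<mu> = 1"
    and "P 0 *v \<mu> \<noteq> 0"
  shows "\<not> has_eigenvalue (walk_U S P (coin_mu \<mu>)) (-1)"
proof
  assume "has_eigenvalue (walk_U S P (coin_mu \<mu>)) (-1)"
  then obtain f where ell: "ell2 f" and nz: "f \<noteq> (\<lambda>_. 0)"
    and eq: "walk_U S P (coin_mu \<mu>) f = (\<lambda>x. (-1) *s f x)"
    unfolding has_eigenvalue_def by blast
  have proj: "\<And>a. a \<in> S \<Longrightarrow> orth_projection (P a)"
    and orth: "\<And>a b. a \<in> S \<Longrightarrow> b \<in> S \<Longrightarrow> a \<noteq> b \<Longrightarrow> P a ** P b = 0"
    and sumI: "(\<Sum>a\<in>S. P a) = mat 1"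
    using assms(3) unfolding resolution_of_unity_def by auto
  define c where "c y = cinner (f y) \<mu>" for y
  have key: "2 * c y *s (P b *v \<mu>) - P b *v f y = - (P b *v f (y + b))" if b: "b \<in> S" for b y
  proof -
    define w where "w a = coin_mu \<mu> *v f (y + b - a)" for a
    have "walk_U S P (coin_mu \<mu>) f (y + b) = (-1) *s f (y + b)" using fun_cong[OF eq, of "y + b"] by simp
    then have "(\<Sum>a\<in>S. P a *v w a) = - f (y + b)" by (simp add: walk_U_def w_def)
    then have e1: "P b *v (\<Sum>a\<in>S. P a *v w a) = - (P b *v f (y + b))" by (simp add: mv_neg)
    have "P b *v (\<Sum>a\<in>S. P a *v w a) = (\<Sum>a\<in>S. (P b ** P a) *v w a)"
      by (simp add: mv_sum2 assms(1) matrix_vector_mul_assoc)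
    also have "\<dots> = (P b ** P b) *v w b + (\<Sum>a\<in>S - {b}. (P b ** P a) *v w a)"
      using assms(1) b by (simp add: sum.remove)
    also have "(\<Sum>a\<in>S - {b}. (P b ** P a) *v w a) = 0"
    proof (intro sum.neutral ballI)
      fix x assume "x \<in> S - {b}"
      then have "P b ** P x = 0" using orth b by auto
      then show "(P b ** P x) *v w x = 0" by simp
    qed
    also have "P b ** P b = P b" using proj[OF b] unfolding orth_projection_def by simp
    finally have "P b *v (\<Sum>a\<in>S. P a *v w a) = P b *v w b" by simp
    with e1 have "P b *v w b = - (P b *v f (y + b))" by simp
    then show ?thesis by (simp add: w_def coin_apply mv_diff mv_scale c_def)
  qed
  have c0: "c y = 0" for y
    using key[OF assms(2), of y] assms(6) by simp
  have per: "P b *v f (y + b) = P b *v f y" if "b \<in> S" for b y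
    using key[OF that, of y] c0 by simp
  have zero: "P b *v f y = 0" if "b \<in> S" "b \<noteq> 0" for b y
    by (rule periodic_zero[OF ell \<open>b \<noteq> 0\<close>]) (rule per[OF \<open>b \<in> S\<close>])
  have fy: "f y = P 0 *v f y" for y
  proof -
    have "f y = (\<Sum>a\<in>S. P a) *v f y" by (simp add: sumI)
    also have "\<dots> = (\<Sum>a\<in>S. P a *v f y)" by (simp add: mv_sum assms(1))
    also have "\<dots> = P 0 *v f y + (\<Sum>a\<in>S - {0}. P a *v f y)"
      using assms(1,2) by (simp add: sum.remove)
    also have "(\<Sum>a\<in>S - {0}. P a *v f y) = 0"
      using zero by (intro sum.neutral) auto
    finally show ?thesis by simp
  qed
  obtain r a where ra: "\<And>x. P 0 *v x = (\<Sum>j\<in>UNIV. r$j * x$j) *s a"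
    using rank1[OF assms(4)] by metis
  define t where "t x = (\<Sum>j\<in>UNIV. r$j * x$j)" for x :: "complex^'n"
  have ra': "P 0 *v x = t x *s a" for x using ra t_def by simp
  have h1: "cinner (P 0 *v \<mu>) \<mu> = cinner (P 0 *v \<mu>) (P 0 *v \<mu>)"
    by (rule proj_inner[OF proj[OF assms(2)]])
  have "cinner (P 0 *v \<mu>) \<mu> \<noteq> 0"
  proof
    assume "cinner (P 0 *v \<mu>) \<mu> = 0"
    with h1 have "cinner (P 0 *v \<mu>) (P 0 *v \<mu>) = 0" by simp
    then have "P 0 *v \<mu> = 0" by (rule cinner_self_0)
    with assms(6) show False by simp
  qed
  then have ca: "cinner a \<mu> \<noteq> 0" by (simp add: ra' cinner_scale)
  have "f y = 0" for y
  proof -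
    have "0 = c y" using c0 by simp
    also have "\<dots> = cinner (P 0 *v f y) \<mu>" unfolding c_def using arg_cong[OF fy[of y], of "\<lambda>v. cinner v \<mu>"] .
    also have "\<dots> = t (f y) * cinner a \<mu>" by (simp add: ra' cinner_scale)
    finally have "t (f y) = 0" using ca by simp
    have "f y = t (f y) *s a" using fy[of y] ra'[of "f y"] by (rule trans)
    also have "\<dots> = 0 *s a" using \<open>t (f y) = 0\<close> by simp
    finally show ?thesis by simp
  qed
  then have "f = (\<lambda>_. 0)" by (rule ext)
  with nz show False by (rule notE)
qed

end
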